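(* Let $\mathbf{X},\mathbf{X}'\in\mathbb{R}^{n\times d}$ be two matrices that differ only in one row, say row $i$, and such that $\|\mathbf{X}_{i,:}-\mathbf{X}'_{i,:}\|_2\le 1$. Let $\mathbf{U}\in\mathbb{R}^{d\times k}$ be a random matrix whose $k$ columns are drawn independently from the uniform distribution on the unit sphere $\mathbb{S}^{d-1}=\{\mathbf{u}\in\mathbb{R}^d:\|\mathbf{u}\|_2=1\}$. Then for every $\delta\in(0,1)$, with probability at least $1-\delta$ (over the draw of $\mathbf{U}$), $$\|\mathbf{X}\mathbf{U}-\mathbf{X}'\mathbf{U}\|_F^2\le w(k,\delta),\qquad w(k,\delta)\doteq\frac{k}{d}+\frac{2}{3}\ln\frac{1}{\delta}+\frac{2}{d}\sqrt{k\,\frac{d-1}{d+2}\ln\frac{1}{\delta}}.$$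
   Context: $\|\cdot\|_F$ denotes the Frobenius norm and $\mathbf{X}_{i,:}$ the $i$-th row of $\mathbf{X}$. *)

theory Defs
  imports "HOL-Probability.Probability"
begin

(* Uniform (normalised surface) distribution on the unit sphere S^{d-1} of real^'d,
   realised as the cone measure: the push-forward of the uniform distribution on the
   open unit ball under the radial projection x |-> x / norm x.  For the Euclidean
   sphere this coincides with the normalised surface (Hausdorff) measure. *)
definition sphere_unif :: "(real ^ 'd::finite) measure" where
  "sphere_unif = distr (uniform_measure lborel (ball 0 1)) borel (\<lambda>x. x /\<^sub>R norm x)"

definition sphere_cols :: "('k::finite \<Rightarrow> real ^ 'd::finite) measure" where
  "sphere_cols = PiM UNIV (\<lambda>_. sphere_unif)"

definition cols_to_mat :: "('k::finite \<Rightarrow> real ^ 'd::finite) \<Rightarrow> real ^ 'k ^ 'd" where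
  "cols_to_mat u = (\<chi> a j. u j $ a)"

definition frob_norm :: "real ^ 'm::finite ^ 'n::finite \<Rightarrow> real" where
  "frob_norm A = sqrt (\<Sum>i\<in>UNIV. \<Sum>j\<in>UNIV. (A $ i $ j)\<^sup>2)"

definition w_bound :: "nat \<Rightarrow> nat \<Rightarrow> real \<Rightarrow> real" where
  "w_bound d k \<delta> = real k / real d + 2/3 * ln (1/\<delta>)
     + 2 / real d * sqrt (real k * ((real d - 1) / (real d + 2)) * ln (1/\<delta>))"

end

theory Submission
  imports Defs
begin

lemma linear_measure_scale:
  fixes f :: "real^'n::finite \<Rightarrow> real^'n"
  assumes "linear f"
  shows "\<exists>c. \<forall>S \<in> lmeasurable. f ` S \<in> lmeasurable \<and> measure lebesgue (f ` S) = c * measure lebesgue S"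
proof (rule induct_linear_elementary [OF \<open>linear f\<close>])
  fix f g :: "real^'n \<Rightarrow> real^'n"
  assume "linear f" "linear g"
    and "\<exists>c. \<forall>S \<in> lmeasurable. f ` S \<in> lmeasurable \<and> measure lebesgue (f ` S) = c * measure lebesgue S"
    and "\<exists>c. \<forall>S \<in> lmeasurable. g ` S \<in> lmeasurable \<and> measure lebesgue (g ` S) = c * measure lebesgue S"
  then obtain cf cg where
    f: "\<And>S. S \<in> lmeasurable \<Longrightarrow> f ` S \<in> lmeasurable \<and> measure lebesgue (f ` S) = cf * measure lebesgue S" and
    g: "\<And>S. S \<in> lmeasurable \<Longrightarrow> g ` S \<in> lmeasurable \<and> measure lebesgue (g ` S) = cg * measure lebesgue S"
    by metis
  show "\<exists>c. \<forall>S \<in> lmeasurable. (f \<circ> g) ` S \<in> lmeasurable \<and> measure lebesgue ((f \<circ> g) ` S) = c * measure lebesgue S"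
  proof (intro exI[of _ "cf * cg"] ballI)
    fix S :: "(real^'n) set" assume S: "S \<in> lmeasurable"
    have gS: "g ` S \<in> lmeasurable" using g[OF S] by blast
    show "(f \<circ> g) ` S \<in> lmeasurable \<and> measure lebesgue ((f \<circ> g) ` S) = cf * cg * measure lebesgue S"
      using f[OF gS] g[OF S] unfolding image_comp[symmetric] by (simp add: mult.assoc)
  qed
next
  fix f :: "real^'n \<Rightarrow> real^'n" and i
  assume "linear f" and 0: "\<And>x. f x $ i = 0"
  then have "\<not> inj f"
    by (metis (full_types) linear_injective_imp_surjective one_neq_zero surjE vec_component)
  show "\<exists>c. \<forall>S \<in> lmeasurable. f ` S \<in> lmeasurable \<and> measure lebesgue (f ` S) = c * measure lebesgue S"
  proof (intro exI[of _ 0] ballI conjI)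
    fix S :: "(real^'n) set" assume "S \<in> lmeasurable"
    show "f ` S \<in> lmeasurable"
      using lmeasurable_iff_indicator_has_integral \<open>linear f\<close> \<open>\<not> inj f\<close> negligible_UNIV negligible_linear_singular_image by blast
    show "measure lebesgue (f ` S) = 0 * measure lebesgue S"
      by (simp add: \<open>\<not> inj f\<close> \<open>linear f\<close> negligible_imp_measure0 negligible_linear_singular_image)
  qed
next
  fix c :: "'n \<Rightarrow> real"
  show "\<exists>d. \<forall>S \<in> lmeasurable. (\<lambda>a. \<chi> i. c i * a $ i) ` S \<in> lmeasurable \<and> measure lebesgue ((\<lambda>a. \<chi> i. c i * a $ i) ` S) = d * measure lebesgue S"
    by (intro exI[of _ "\<bar>prod c UNIV\<bar>"] ballI conjI measurable_stretch measure_stretch)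
next
  fix m :: "'n" and n :: "'n"
  assume "m \<noteq> n"
  let ?h = "\<lambda>v::(real, 'n) vec. \<chi> i. v $ Transposition.transpose m n i"
  have lin: "linear ?h"
    by (rule linearI) (simp_all add: plus_vec_def scaleR_vec_def)
  have meq: "measure lebesgue (?h ` cbox a b) = 1 * measure lebesgue (cbox a b)" for a b
  proof (cases "cbox a b = {}")
    case True then show ?thesis
      by simp
  next
    case False
    then have him: "?h ` (cbox a b) \<noteq> {}"
      by blast
    have eq: "?h ` (cbox a b) = cbox (?h a) (?h b)"
      by (auto simp: image_iff lambda_swap_Galois mem_box_cart) (metis transpose_involutory)+
    show ?thesis
      using him prod.permute [OF permutes_swap_id, where S=UNIV and g="\<lambda>i. (b - a)$i", symmetric]
      by (simp add: eq content_cbox_cart False)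
  qed
  show "\<exists>c. \<forall>S \<in> lmeasurable. ?h ` S \<in> lmeasurable \<and> measure lebesgue (?h ` S) = c * measure lebesgue S"
  proof (intro exI[of _ 1] ballI)
    fix S :: "(real^'n) set" assume "S \<in> lmeasurable"
    from measure_linear_sufficient[OF lin this meq]
    show "?h ` S \<in> lmeasurable \<and> measure lebesgue (?h ` S) = 1 * measure lebesgue S" by simp
  qed
next
  fix m n :: "'n"
  assume "m \<noteq> n"
  let ?h = "\<lambda>v::(real, 'n) vec. \<chi> i. if i = m then v $ m + v $ n else v $ i"
  have lin: "linear ?h"
    by (rule linearI) (auto simp: algebra_simps plus_vec_def scaleR_vec_def vec_eq_iff)
  have meq: "measure lebesgue (?h ` (cbox a b)) = 1 * measure lebesgue (cbox a b)" for a b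
  proof (cases "cbox a b = {}")
    case True then show ?thesis by simp
  next
    case False
    then have ne: "(+) (\<chi> i. if i = n then - a $ n else 0) ` cbox a b \<noteq> {}"
      by auto
    let ?v = "\<chi> i. if i = n then - a $ n else 0"
    have "?h ` cbox a b
          = (+) (\<chi> i. if i = m \<or> i = n then a $ n else 0) ` ?h ` (+) ?v ` (cbox a b)"
      using \<open>m \<noteq> n\<close> unfolding image_comp o_def by (force simp: vec_eq_iff)
    then have "measure lebesgue (?h ` (cbox a b))
             = measure lebesgue ((\<lambda>v. \<chi> i. if i = m then v $ m + v $ n else v $ i) `
                                 (+) ?v ` cbox a b)"
      by (rule ssubst) (rule measure_translation)
    also have "\<dots> = measure lebesgue ((\<lambda>v. \<chi> i. if i = m then v $ m + v $ n else v $ i) ` cbox (?v +a) (?v + b))"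
      by (metis (no_types, lifting) cbox_translation)
    also have "\<dots> = measure lebesgue ((+) ?v ` cbox a b)"
      apply (subst measure_shear_interval)
      using \<open>m \<noteq> n\<close> ne apply auto
      apply (simp add: cbox_translation)
      by (metis cbox_borel cbox_translation measure_completion sets_lborel)
    also have "\<dots> = measure lebesgue (cbox a b)"
      by (rule measure_translation)
    finally show ?thesis by simp
  qed
  show "\<exists>c. \<forall>S \<in> lmeasurable. ?h ` S \<in> lmeasurable \<and> measure lebesgue (?h ` S) = c * measure lebesgue S"
  proof (intro exI[of _ 1] ballI)
    fix S :: "(real^'n) set" assume "S \<in> lmeasurable"
    from measure_linear_sufficient[OF lin this meq]
    show "?h ` S \<in> lmeasurable \<and> measure lebesgue (?h ` S) = 1 * measure lebesgue S" by simp
  qed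
qed

lemma measure_orth_image:
  fixes f :: "real^'n::finite \<Rightarrow> real^'n"
  assumes f: "orthogonal_transformation f" and S: "S \<in> lmeasurable"
  shows "measure lebesgue (f ` S) = measure lebesgue S"
proof -
  obtain c where c: "\<And>S. S \<in> lmeasurable \<Longrightarrow> f ` S \<in> lmeasurable \<and> measure lebesgue (f ` S) = c * measure lebesgue S"
    using linear_measure_scale[OF orthogonal_transformation_linear[OF f]] by metis
  have "f ` ball 0 1 = ball 0 1" using image_orthogonal_transformation_ball[OF f, of 0 1]
    orthogonal_transformation_linear[OF f] by (simp add: linear_0)
  then have "measure lebesgue (ball (0::real^'n) 1) = c * measure lebesgue (ball (0::real^'n) 1)"
    using c[of "ball 0 1"] by simp
  moreover have "measure lebesgue (ball (0::real^'n) 1) > 0"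
    by (simp add: content_ball_pos)
  ultimately have "c = 1" by simp
  then show ?thesis using c[OF S] by simp
qed

abbreviation "UB \<equiv> uniform_measure lborel (ball (0::real^'d::finite) 1)"

lemma ball_meas_pos: "emeasure lborel (ball (0::real^'d::finite) 1) \<noteq> 0"
proof -
  have h: "unit_ball_vol (real CARD('d)) \<noteq> 0"
    using unit_ball_vol_pos[of "real CARD('d)"] by (metis less_irrefl of_nat_0_le_iff)
  show ?thesis by (simp add: emeasure_ball h)
qed

lemma ball_meas_fin: "emeasure lborel (ball (0::real^'d::finite) 1) \<noteq> \<infinity>"
  by (simp add: emeasure_ball)

lemma prob_UB: "prob_space (UB :: (real^'d::finite) measure)"
  by (intro prob_space_uniform_measure ball_meas_pos ball_meas_fin)

lemma nrm_meas[measurable]: "(\<lambda>x::real^'d::finite. x /\<^sub>R norm x) \<in> borel_measurable borel"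
  by measurable

lemma prob_sphere: "prob_space (sphere_unif :: (real^'d::finite) measure)"
  unfolding sphere_unif_def
  by (intro prob_space.prob_space_distr prob_UB) simp

lemma space_sphere[simp]: "space (sphere_unif :: (real^'d::finite) measure) = UNIV"
  by (simp add: sphere_unif_def)

lemma sets_sphere[simp, measurable_cong]: "sets (sphere_unif :: (real^'d::finite) measure) = sets borel"
  by (simp add: sphere_unif_def)

lemma AE_sphere_norm: "AE u in (sphere_unif :: (real^'d::finite) measure). norm u = 1"
proof -
  have "AE x in (UB :: (real^'d) measure). x \<noteq> 0"
    by (intro AE_uniform_measureI) (auto intro: AE_lborel_singleton[THEN eventually_mono])
  then have "AE x in (UB :: (real^'d) measure). norm (x /\<^sub>R norm x) = 1"
    by eventually_elim simp
  then show ?thesis unfolding sphere_unif_def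
    by (subst AE_distr_iff) auto
qed

lemma integrable_sphere:
  fixes f :: "real^'d::finite \<Rightarrow> real"
  assumes "f \<in> borel_measurable borel" and "\<And>u. norm u = 1 \<Longrightarrow> \<bar>f u\<bar> \<le> B"
  shows "integrable sphere_unif f"
proof -
  interpret prob_space "sphere_unif :: (real^'d) measure" by (rule prob_sphere)
  show ?thesis
    using AE_sphere_norm assms
    by (intro integrable_const_bound[where B=B]) (auto elim!: eventually_mono)
qed


definition hh :: "real^'d::finite \<Rightarrow> real^'d \<Rightarrow> real^'d" where
  "hh w x = x - (2 * (w \<bullet> x) / (w \<bullet> w)) *\<^sub>R w"

lemma hh_inner: "w \<noteq> 0 \<Longrightarrow> hh w x \<bullet> hh w y = x \<bullet> y"
  unfolding hh_def
  by (simp add: inner_diff_left inner_diff_right inner_commute field_simps power2_eq_square)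

lemma hh_sym: "hh w x \<bullet> y = x \<bullet> hh w y"
  unfolding hh_def by (simp add: inner_diff_left inner_diff_right inner_commute)

lemma hh_invol: "w \<noteq> 0 \<Longrightarrow> hh w (hh w x) = x"
  unfolding hh_def
  by (simp add: inner_diff_right algebra_simps)

lemma hh_linear: "linear (hh w)"
  unfolding hh_def
  by (intro linearI) (simp_all add: inner_add_right algebra_simps add_divide_distrib scaleR_add_left)

lemma hh_orth: "w \<noteq> 0 \<Longrightarrow> orthogonal_transformation (hh w)"
  unfolding orthogonal_transformation_def using hh_linear hh_inner by blast

lemma hh_norm: "w \<noteq> 0 \<Longrightarrow> norm (hh w x) = norm x"
  using hh_orth orthogonal_transformation_norm by blast

lemma hh_meas[measurable]: "hh w \<in> borel_measurable borel"
  unfolding hh_def by measurable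

lemma hh_unit:
  assumes "norm e = 1" "norm e' = 1" "e \<noteq> e'"
  shows "hh (e - e') e = e'"
proof -
  have ee: "e \<bullet> e = 1" "e' \<bullet> e' = 1" using assms by (simp_all add: norm_eq_1)
  have "e \<bullet> e' \<noteq> 1"
  proof
    assume "e \<bullet> e' = 1"
    then have "(e - e') \<bullet> (e - e') = 0" using ee by (simp add: inner_diff_left inner_diff_right inner_commute)
    then show False using assms(3) by simp
  qed
  have h1: "(e - e') \<bullet> e = 1 - e \<bullet> e'" and h2: "(e - e') \<bullet> (e - e') = 2 - 2 * (e \<bullet> e')"
    using ee by (simp_all add: inner_diff_left inner_diff_right inner_commute)
  have "2 * ((e - e') \<bullet> e) / ((e - e') \<bullet> (e - e')) = 2 * (1 - e \<bullet> e') / (2 - 2 * (e \<bullet> e'))"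
    by (simp only: h1 h2)
  also have "\<dots> = 1" using \<open>e \<bullet> e' \<noteq> 1\<close> by (simp add: field_simps)
  finally have c1: "2 * ((e - e') \<bullet> e) / ((e - e') \<bullet> (e - e')) = 1" .
  show ?thesis unfolding hh_def by (simp only: c1) simp
qed


lemma lborel_hh_ball:
  fixes w :: "real^'d::finite"
  assumes w: "w \<noteq> 0" and A: "A \<in> sets borel"
  shows "emeasure lborel (hh w -` A \<inter> ball 0 1) = emeasure lborel (A \<inter> ball 0 1)"
proof -
  let ?S = "A \<inter> ball (0::real^'d) 1"
  have eq: "hh w -` A \<inter> ball 0 1 = hh w ` ?S"
  proof (intro equalityI subsetI)
    fix x assume x: "x \<in> hh w -` A \<inter> ball 0 1"
    then have "hh w x \<in> ?S" using hh_norm[OF w] by auto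
    then show "x \<in> hh w ` ?S" using hh_invol[OF w, of x] by (metis image_eqI)
  next
    fix x assume "x \<in> hh w ` ?S"
    then show "x \<in> hh w -` A \<inter> ball 0 1" using hh_norm[OF w] hh_invol[OF w] by auto
  qed
  have Sb: "?S \<in> sets lborel" using A by simp
  have Tb: "hh w -` A \<inter> ball 0 1 \<in> sets lborel"
    using A by (simp add: measurable_sets_borel[OF hh_meas] sets.Int)
  have fin: "B \<subseteq> ball 0 1 \<Longrightarrow> B \<in> sets lborel \<Longrightarrow> B \<in> fmeasurable lborel" for B :: "(real^'d) set"
  proof (intro fmeasurableI)
    assume "B \<subseteq> ball 0 1" "B \<in> sets lborel"
    then have "emeasure lborel B \<le> emeasure lborel (ball (0::real^'d) 1)" by (intro emeasure_mono) auto
    then show "emeasure lborel B < \<infinity>" using emeasure_lborel_ball_finite[of "0::real^'d" 1] by order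
  qed
  have Sl: "?S \<in> lmeasurable"
    by (intro bounded_set_imp_lmeasurable) (auto intro: bounded_subset[of "ball 0 1"] sets_completionI_sets[OF Sb])
  have "measure lebesgue (hh w ` ?S) = measure lebesgue ?S"
    by (rule measure_orth_image[OF hh_orth[OF w] Sl])
  then have "measure lborel (hh w -` A \<inter> ball 0 1) = measure lborel ?S"
    using Sb Tb eq by (simp add: measure_completion)
  then show ?thesis
    using fin[OF _ Sb] fin[OF _ Tb] by (simp add: emeasure_eq_measure2)
qed

lemma UB_hh:
  fixes w :: "real^'d::finite"
  assumes w: "w \<noteq> 0"
  shows "distr UB borel (hh w) = (UB :: (real^'d) measure)"
proof (rule measure_eqI)
  fix A assume "A \<in> sets (distr (UB :: (real^'d) measure) borel (hh w))"
  then have A: "A \<in> sets borel" by simp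
  have "emeasure (distr (UB :: (real^'d) measure) borel (hh w)) A = emeasure UB (hh w -` A)"
    using A by (simp add: emeasure_distr)
  also have "\<dots> = emeasure UB A"
    using A lborel_hh_ball[OF w A]
    by (simp add: measurable_sets_borel[OF hh_meas] Int_commute)
  finally show "emeasure (distr (UB :: (real^'d) measure) borel (hh w)) A = emeasure UB A" .
qed simp

lemma sphere_hh:
  fixes w :: "real^'d::finite"
  assumes w: "w \<noteq> 0"
  shows "distr sphere_unif borel (hh w) = (sphere_unif :: (real^'d) measure)"
proof -
  have comm: "hh w \<circ> (\<lambda>x. x /\<^sub>R norm x) = (\<lambda>x. x /\<^sub>R norm x) \<circ> hh w"
    using linear_cmul[OF hh_linear] hh_norm[OF w] by (auto simp: fun_eq_iff)
  have "distr sphere_unif borel (hh w) = distr (UB :: (real^'d) measure) borel (hh w \<circ> (\<lambda>x. x /\<^sub>R norm x))"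
    unfolding sphere_unif_def by (subst distr_distr) auto
  also have "\<dots> = distr (distr (UB :: (real^'d) measure) borel (hh w)) borel (\<lambda>x. x /\<^sub>R norm x)"
    unfolding comm by (subst distr_distr) auto
  also have "\<dots> = sphere_unif" unfolding UB_hh[OF w] sphere_unif_def ..
  finally show ?thesis .
qed

lemma integral_sphere_hh:
  fixes w :: "real^'d::finite" and f :: "real^'d \<Rightarrow> real"
  assumes w: "w \<noteq> 0" and f[measurable]: "f \<in> borel_measurable borel"
  shows "(\<integral>u. f (hh w u) \<partial>sphere_unif) = (\<integral>u. f u \<partial>sphere_unif)"
proof -
  have "(\<integral>u. f u \<partial>sphere_unif) = (\<integral>u. f u \<partial>distr sphere_unif borel (hh w))"
    unfolding sphere_hh[OF w] ..
  also have "\<dots> = (\<integral>u. f (hh w u) \<partial>sphere_unif)"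
    by (rule integral_distr) auto
  finally show ?thesis ..
qed

lemma integral_sphere_dir:
  fixes e e' :: "real^'d::finite" and g :: "real \<Rightarrow> real"
  assumes e: "norm e = 1" "norm e' = 1" and g[measurable]: "g \<in> borel_measurable borel"
  shows "(\<integral>u. g (e \<bullet> u) \<partial>sphere_unif) = (\<integral>u. g (e' \<bullet> u) \<partial>sphere_unif)"
proof (cases "e = e'")
  case False
  then have w: "e - e' \<noteq> 0" by simp
  have "(\<integral>u. g (e \<bullet> u) \<partial>sphere_unif) = (\<integral>u. g (e \<bullet> hh (e - e') u) \<partial>sphere_unif)"
    by (rule integral_sphere_hh[OF w, symmetric]) measurable
  also have "\<dots> = (\<integral>u. g (e' \<bullet> u) \<partial>sphere_unif)"
    using hh_sym[of "e - e'" e] hh_unit[OF e False] by (simp add: inner_commute)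
  finally show ?thesis .
qed simp

lemma abs_inner_le: "norm (u::real^'d::finite) = 1 \<Longrightarrow> \<bar>w \<bullet> u\<bar> \<le> norm w"
  using Cauchy_Schwarz_ineq2[of w u] by simp

lemma integrable_pow_inner: "integrable sphere_unif (\<lambda>u::real^'d::finite. (w \<bullet> u) ^ p)"
proof (rule integrable_sphere[where B="norm w ^ p"])
  fix u :: "real^'d" assume "norm u = 1"
  then show "\<bar>(w \<bullet> u) ^ p\<bar> \<le> norm w ^ p"
    unfolding power_abs by (intro power_mono abs_inner_le) auto
qed measurable

definition mom :: "'d::finite itself \<Rightarrow> nat \<Rightarrow> real" where
  "mom _ p = (\<integral>u. ((axis (undefined::'d::finite) 1 :: real^'d) \<bullet> u) ^ p \<partial>(sphere_unif :: (real^'d) measure))"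

lemma mom_dir:
  fixes w :: "real^'d::finite"
  assumes "norm w = 1"
  shows "(\<integral>u. (w \<bullet> u) ^ p \<partial>sphere_unif) = mom TYPE('d) p"
  unfolding mom_def using assms
  by (intro integral_sphere_dir[where g="\<lambda>t. t ^ p"]) auto


lemma mom_scale:
  fixes w :: "real^'d::finite"
  assumes p: "p > 0"
  shows "(\<integral>u. (w \<bullet> u) ^ p \<partial>sphere_unif) = norm w ^ p * mom TYPE('d) p"
proof (cases "w = 0")
  case True then show ?thesis using p by simp
next
  case False
  let ?e = "w /\<^sub>R norm w"
  have ne: "norm ?e = 1" using False by simp
  have "\<And>u. (w \<bullet> u) ^ p = norm w ^ p * (?e \<bullet> u) ^ p"
  proof -
    fix u
    have "w \<bullet> u = norm w * (?e \<bullet> u)" using False by simp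
    from arg_cong[OF this, of "\<lambda>t. t ^ p"]
    show "(w \<bullet> u) ^ p = norm w ^ p * (?e \<bullet> u) ^ p" by (simp only: power_mult_distrib)
  qed
  then have "(\<integral>u. (w \<bullet> u) ^ p \<partial>sphere_unif) = (\<integral>u. norm w ^ p * (?e \<bullet> u) ^ p \<partial>sphere_unif)"
    by simp
  also have "\<dots> = norm w ^ p * (\<integral>u. (?e \<bullet> u) ^ p \<partial>sphere_unif)"
    by (rule integral_mult_right_zero)
  also have "\<dots> = norm w ^ p * mom TYPE('d) p" using mom_dir[OF ne] by simp
  finally show ?thesis .
qed

lemma sphere_norm_integral:
  fixes f :: "real \<Rightarrow> real"
  assumes [measurable]: "f \<in> borel_measurable borel"
  shows "(\<integral>u. f (norm u) \<partial>(sphere_unif :: (real^'d::finite) measure)) = f 1"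
proof -
  interpret prob_space "sphere_unif :: (real^'d) measure" by (rule prob_sphere)
  have "(\<integral>u. f (norm u) \<partial>(sphere_unif :: (real^'d) measure)) = (\<integral>u. f 1 \<partial>(sphere_unif :: (real^'d) measure))"
    by (intro integral_cong_AE) (auto intro: AE_sphere_norm[THEN eventually_mono])
  then show ?thesis using prob_space.prob_space[OF prob_sphere[where 'd='d]] by (simp add: measure_def)
qed

lemma ax_inner: "axis a 1 \<bullet> (u::real^'d::finite) = u $ a"
  by (simp add: inner_axis')

lemma sum_sq_coord: "(\<Sum>a\<in>UNIV. (axis a 1 \<bullet> u) ^ 2) = norm (u::real^'d::finite) ^ 2"
proof -
  have "norm u ^ 2 = u \<bullet> u" by (rule power2_norm_eq_inner)
  also have "\<dots> = (\<Sum>a\<in>UNIV. u $ a * u $ a)" by (simp add: inner_vec_def)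
  finally show ?thesis unfolding ax_inner by (simp add: power2_eq_square)
qed

lemma mom2: "real CARD('d::finite) * mom TYPE('d) 2 = 1"
proof -
  have "(\<Sum>a\<in>(UNIV::'d set). (\<integral>u. (axis a 1 \<bullet> u) ^ 2 \<partial>sphere_unif)) =
        (\<integral>u. (\<Sum>a\<in>UNIV. (axis a 1 \<bullet> u) ^ 2) \<partial>(sphere_unif :: (real^'d) measure))"
    by (simp add: integral_sum integrable_pow_inner)
  also have "\<dots> = (\<integral>u. norm u ^ 2 \<partial>(sphere_unif :: (real^'d) measure))"
    by (simp add: sum_sq_coord)
  also have "\<dots> = 1" using sphere_norm_integral[where f="\<lambda>t. t ^ 2"] by simp
  finally have "(\<Sum>a\<in>(UNIV::'d set). (\<integral>u. (axis a 1 \<bullet> u) ^ 2 \<partial>sphere_unif)) = 1" .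
  moreover have "\<And>a::'d. (\<integral>u. (axis a 1 \<bullet> u) ^ 2 \<partial>sphere_unif) = mom TYPE('d) 2"
    by (rule mom_dir) simp
  ultimately show ?thesis by simp
qed

lemma quartic_id:
  fixes x y :: real
  shows "(x + y) ^ 4 + (x - y) ^ 4 = 2 * x ^ 4 + 12 * (x\<^sup>2 * y\<^sup>2) + 2 * y ^ 4"
  by algebra

lemma pointwise4:
  fixes u :: "real^'d::finite"
  shows "(\<Sum>a\<in>UNIV. \<Sum>b\<in>UNIV. ((axis a 1 + axis b 1) \<bullet> u) ^ 4 + ((axis a 1 - axis b 1) \<bullet> u) ^ 4)
       = 4 * real CARD('d) * (\<Sum>a\<in>UNIV. (axis a 1 \<bullet> u) ^ 4) + 12 * norm u ^ 4"
proof -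
  let ?x = "\<lambda>a. axis a 1 \<bullet> u"
  have "(\<Sum>a\<in>UNIV. \<Sum>b\<in>UNIV. ((axis a 1 + axis b 1) \<bullet> u) ^ 4 + ((axis a 1 - axis b 1) \<bullet> u) ^ 4)
      = (\<Sum>a\<in>(UNIV::'d set). \<Sum>b\<in>UNIV. 2 * ?x a ^ 4 + 12 * (?x a ^ 2 * ?x b ^ 2) + 2 * ?x b ^ 4)"
    by (simp add: inner_add_left inner_diff_left quartic_id)
  also have "\<dots> = (\<Sum>a\<in>(UNIV::'d set). \<Sum>b\<in>(UNIV::'d set). 2 * ?x a ^ 4) + 12 * (\<Sum>a\<in>(UNIV::'d set). \<Sum>b\<in>(UNIV::'d set). ?x a ^ 2 * ?x b ^ 2)
                  + (\<Sum>a\<in>(UNIV::'d set). \<Sum>b\<in>(UNIV::'d set). 2 * ?x b ^ 4)"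
    by (simp add: sum.distrib sum_distrib_left)
  also have "(\<Sum>a\<in>(UNIV::'d set). \<Sum>b\<in>(UNIV::'d set). ?x a ^ 2 * ?x b ^ 2) = (\<Sum>a\<in>UNIV. ?x a ^ 2) * (\<Sum>b\<in>UNIV. ?x b ^ 2)"
    by (simp add: sum_product)
  also have "(\<Sum>a\<in>UNIV. ?x a ^ 2) = norm u ^ 2" by (rule sum_sq_coord)
  also have "(\<Sum>a\<in>(UNIV::'d set). \<Sum>b\<in>(UNIV::'d set). 2 * ?x a ^ 4) = 2 * real CARD('d) * (\<Sum>a\<in>UNIV. ?x a ^ 4)"
    by (simp add: sum_distrib_left mult_ac)
  also have "(\<Sum>a\<in>(UNIV::'d set). \<Sum>b\<in>(UNIV::'d set). 2 * ?x b ^ 4) = 2 * real CARD('d) * (\<Sum>a\<in>UNIV. ?x a ^ 4)"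
    by (simp add: sum_distrib_left mult_ac)
  finally show ?thesis by (simp add: power2_eq_square power4_eq_xxxx algebra_simps)
qed

lemma norm4_inner: "norm (x::real^'d::finite) ^ 4 = (x \<bullet> x) ^ 2"
  by (simp add: power2_norm_eq_inner[symmetric] power_mult[symmetric])

lemma norm_axis_pm:
  "norm (axis a 1 + axis b (1::real)) ^ 4 + norm (axis a 1 - axis b (1::real)) ^ 4 = 8 + 8 * (if a = b then 1 else 0)"
proof (cases "a = b")
  case True
  show ?thesis unfolding norm4_inner inner_add_left inner_add_right inner_diff_left inner_diff_right inner_axis_axis
    using True by simp
next
  case False
  then show ?thesis unfolding norm4_inner
    by (simp add: inner_add_left inner_add_right inner_diff_left inner_diff_right inner_axis_axis)
qed

lemma mom4: "real CARD('d::finite) * (real CARD('d) + 2) * mom TYPE('d) 4 = 3"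
proof -
  let ?S = "sphere_unif :: (real^'d) measure"
  let ?d = "real CARD('d)"
  let ?m = "mom TYPE('d) 4"
  have int4: "integrable ?S (\<lambda>u. (w \<bullet> u) ^ 4)" for w :: "real^'d" by (rule integrable_pow_inner)
  have "(\<integral>u. (\<Sum>a\<in>UNIV. \<Sum>b\<in>UNIV. ((axis a 1 + axis b 1) \<bullet> u) ^ 4 + ((axis a 1 - axis b 1) \<bullet> u) ^ 4) \<partial>?S)
      = (\<Sum>a\<in>UNIV. \<Sum>b\<in>UNIV. (\<integral>u. ((axis a 1 + axis b 1) \<bullet> u) ^ 4 \<partial>?S) + (\<integral>u. ((axis a 1 - axis b 1) \<bullet> u) ^ 4 \<partial>?S))"
    by (simp add: integral_sum int4 integrable_sum Bochner_Integration.integral_add)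
  also have "\<dots> = (\<Sum>a\<in>(UNIV::'d set). \<Sum>b\<in>(UNIV::'d set). ?m * (8 + 8 * (if a = b then 1 else 0)))"
  proof -
    have ms: "\<And>w. (\<integral>u. (w \<bullet> u) ^ 4 \<partial>?S) = norm w ^ 4 * ?m" using mom_scale[of 4] by simp
    show ?thesis by (simp only: ms norm_axis_pm[symmetric]) (simp add: algebra_simps)
  qed
  also have "\<dots> = ?m * (8 * ?d * ?d + 8 * ?d)"
  proof -
    have r: "?m * (8 + 8 * (if a = b then 1 else 0)) = 8 * ?m + (if a = b then 8 * ?m else 0)" for a b :: 'd
      by simp
    have inner: "(\<Sum>b\<in>(UNIV::'d set). ?m * (8 + 8 * (if a = b then 1 else 0))) = 8 * ?m * ?d + 8 * ?m" for a :: 'd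
      unfolding r by (simp add: sum.distrib)
    show ?thesis unfolding inner by (simp add: algebra_simps)
  qed
  finally have L: "(\<integral>u. (\<Sum>a\<in>UNIV. \<Sum>b\<in>UNIV. ((axis a 1 + axis b 1) \<bullet> u) ^ 4 + ((axis a 1 - axis b 1) \<bullet> u) ^ 4) \<partial>?S)
     = ?m * (8 * ?d * ?d + 8 * ?d)" .
  have "(\<integral>u. (\<Sum>a\<in>UNIV. \<Sum>b\<in>UNIV. ((axis a 1 + axis b 1) \<bullet> u) ^ 4 + ((axis a 1 - axis b 1) \<bullet> u) ^ 4) \<partial>?S)
      = (\<integral>u. 4 * ?d * (\<Sum>a\<in>UNIV. (axis a 1 \<bullet> u) ^ 4) + 12 * norm u ^ 4 \<partial>?S)"
    by (simp only: pointwise4)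
  also have "\<dots> = 4 * ?d * (\<Sum>a\<in>UNIV. (\<integral>u. (axis a 1 \<bullet> u) ^ 4 \<partial>?S)) + 12 * (\<integral>u. norm u ^ 4 \<partial>?S)"
  proof -
    have i2: "integrable ?S (\<lambda>u. norm u ^ 4)"
      by (rule integrable_sphere[where B=1]) auto
    show ?thesis
      by (simp add: integral_sum int4 integrable_sum i2 Bochner_Integration.integral_add)
  qed
  also have "\<dots> = 4 * ?d * (?d * ?m) + 12"
  proof -
    have "\<And>a::'d. (\<integral>u. (axis a 1 \<bullet> u) ^ 4 \<partial>?S) = ?m" by (rule mom_dir) simp
    then show ?thesis using sphere_norm_integral[where f="\<lambda>t. t ^ 4", where 'd='d] by simp
  qed
  finally have R: "(\<integral>u. (\<Sum>a\<in>UNIV. \<Sum>b\<in>UNIV. ((axis a 1 + axis b 1) \<bullet> u) ^ 4 + ((axis a 1 - axis b 1) \<bullet> u) ^ 4) \<partial>?S)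
      = 4 * ?d * (?d * ?m) + 12" .
  from L R show ?thesis by (simp add: algebra_simps)
qed

lemma fact_ge3: "2 * 3 ^ n \<le> (fact (n + 2) :: real)"
proof (induction n)
  case 0 then show ?case by simp
next
  case (Suc n)
  have "fact (Suc n + 2) = real (n + 3) * (fact (n + 2) :: real)"
    by (simp add: fact_Suc add.commute del: of_nat_add)
  also have "\<dots> \<ge> 3 * (2 * 3 ^ n)"
    using Suc by (intro mult_mono) auto
  finally show ?case by simp
qed

lemma exp_bern:
  fixes x c :: real
  assumes xc: "\<bar>x\<bar> \<le> c" and c3: "c < 3"
  shows "exp x \<le> 1 + x + x\<^sup>2 / (2 * (1 - c / 3))"
proof -
  have c0: "0 \<le> c" using xc by linarith
  have gs: "summable (\<lambda>n. (c/3)^n)" using c0 c3 by (intro summable_geometric) auto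
  have b: "x ^ (n + 2) / fact (n + 2) \<le> x\<^sup>2 / 2 * (c/3)^n" for n
  proof -
    have "x ^ (n + 2) / fact (n + 2) \<le> \<bar>x\<bar> ^ (n + 2) / fact (n + 2)"
      proof (intro divide_right_mono)
      show "x ^ (n + 2) \<le> \<bar>x\<bar> ^ (n + 2)" by (metis abs_ge_self power_abs)
    qed simp
    also have "\<bar>x\<bar> ^ (n + 2) = x\<^sup>2 * \<bar>x\<bar>^n" by (simp add: power_add power2_eq_square)
    also have "\<dots> \<le> x\<^sup>2 * c^n" using xc by (intro mult_left_mono power_mono) auto
    also have "x\<^sup>2 * c^n / fact (n + 2) \<le> x\<^sup>2 * c^n / (2 * 3^n)"
      using fact_ge3[of n] c0 by (intro divide_left_mono) auto
    also have "\<dots> = x\<^sup>2 / 2 * (c/3)^n" by (simp add: power_divide)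
    finally show ?thesis by (simp add: divide_right_mono)
  qed
  have s1: "summable (\<lambda>n. x\<^sup>2 / 2 * (c/3)^n)" using gs by (rule summable_mult)
  have s2: "summable (\<lambda>n. x ^ (n + 2) / fact (n + 2))"
    using summable_ignore_initial_segment[OF summable_exp_generic[of x], of 2] by (simp add: divide_inverse_commute)
  have "(\<Sum>n. x ^ (n + 2) / fact (n + 2)) \<le> (\<Sum>n. x\<^sup>2 / 2 * (c/3)^n)"
    using b by (intro suminf_le s1 s2) 
  also have "\<dots> = x\<^sup>2 / 2 * (1 / (1 - c/3))"
    proof -
    have "(\<Sum>n. (c/3)^n) = 1 / (1 - c/3)" using c0 c3 by (intro suminf_geometric) auto
    then show ?thesis using suminf_mult[OF gs, of "x\<^sup>2 / 2"] by simp
  qed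
  also have "\<dots> = x\<^sup>2 / (2 * (1 - c / 3))" by simp
  finally have *: "(\<Sum>n. x ^ (n + 2) / fact (n + 2)) \<le> x\<^sup>2 / (2 * (1 - c / 3))" .
  have "exp x = 1 + x + (\<Sum>n. x ^ (n + 2) / fact (n + 2))"
    using exp_first_two_terms[of x] by (simp add: divide_inverse_commute)
  with * show ?thesis by linarith
qed

lemma mom2_val: "mom TYPE('d::finite) 2 = 1 / real CARD('d)"
  using mom2[where 'd='d] by (simp add: field_simps)

lemma mom4_val: "mom TYPE('d::finite) 4 = 3 / (real CARD('d) * (real CARD('d) + 2))"
proof -
  have h: "real CARD('d) * (real CARD('d) + 2) \<noteq> 0" by simp
  show ?thesis using mom4[where 'd='d] h by (simp add: eq_divide_eq mult.commute)
qed

lemma mgf1: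
  fixes v :: "real^'d::finite" and l :: real
  assumes v: "norm v \<le> 1" and l0: "0 \<le> l" and l3: "l < 3"
  defines "d \<equiv> real CARD('d)"
  shows "(\<integral>u. exp (l * (v \<bullet> u)\<^sup>2) \<partial>sphere_unif)
          \<le> exp (l / d + l\<^sup>2 * (2 * (d - 1) / (d\<^sup>2 * (d + 2))) / (2 * (1 - l / 3)))"
proof -
  let ?S = "sphere_unif :: (real^'d) measure"
  interpret P: prob_space "sphere_unif :: (real^'d) measure" by (rule prob_sphere)
  define K where "K = 1 / (2 * (1 - l / 3))"
  have K0: "K > 0" using l3 by (simp add: K_def)
  have d1: "d \<ge> 1" by (simp add: d_def)
  define \<mu> where "\<mu> = norm v ^ 2 / d"
  define M4 where "M4 = norm v ^ 4 * (3 / (d * (d + 2)))"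
  have I2: "(\<integral>u. (v \<bullet> u) ^ 2 \<partial>?S) = \<mu>"
    using mom_scale[of 2 v] by (simp add: mom2_val \<mu>_def d_def)
  have I4: "(\<integral>u. (v \<bullet> u) ^ 4 \<partial>?S) = M4"
    using mom_scale[of 4 v] by (simp add: mom4_val M4_def d_def)
  have nv2: "norm v ^ 2 \<le> 1" using v by (simp add: power_le_one)
  have mu0: "0 \<le> \<mu>" and mu1: "\<mu> \<le> 1" "\<mu> \<le> 1 / d"
    using nv2 d1 by (auto simp: \<mu>_def divide_right_mono)
  define E where "E = exp (l * \<mu>)"
  define g where "g = (\<lambda>u::real^'d. E * ((1 - l * \<mu> + K * l\<^sup>2 * \<mu>\<^sup>2) + (l - 2 * K * l\<^sup>2 * \<mu>) * (v \<bullet> u) ^ 2 + K * l\<^sup>2 * (v \<bullet> u) ^ 4))"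
  have pw: "exp (l * (v \<bullet> u)\<^sup>2) \<le> g u" if u: "norm u = 1" for u :: "real^'d"
  proof -
    define Y where "Y = (v \<bullet> u)\<^sup>2 - \<mu>"
    have z0: "0 \<le> (v \<bullet> u)\<^sup>2" by simp
    have z1: "(v \<bullet> u)\<^sup>2 \<le> 1"
    proof -
      have "\<bar>v \<bullet> u\<bar> \<le> 1" using abs_inner_le[OF u, of v] v by linarith
      then show ?thesis by (simp add: abs_square_le_1)
    qed
    have "\<bar>l * Y\<bar> \<le> l"
    proof -
      have "\<bar>Y\<bar> \<le> 1" unfolding Y_def abs_le_iff using z0 z1 mu0 mu1 by (intro conjI) linarith+
      then show ?thesis using l0 by (simp add: abs_mult mult_left_le)
    qed
    from exp_bern[OF this l3]
    have "exp (l * Y) \<le> 1 + l * Y + (l * Y)\<^sup>2 / (2 * (1 - l / 3))" .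
    then have "E * exp (l * Y) \<le> E * (1 + l * Y + (l * Y)\<^sup>2 / (2 * (1 - l / 3)))"
      by (simp add: E_def)
    moreover have "E * exp (l * Y) = exp (l * (v \<bullet> u)\<^sup>2)"
      by (simp add: E_def Y_def exp_add[symmetric] algebra_simps)
    moreover have "E * (1 + l * Y + (l * Y)\<^sup>2 / (2 * (1 - l / 3))) = E * (1 + l * Y + K * (l * Y)\<^sup>2)"
      by (simp add: K_def)
    moreover have "E * (1 + l * Y + K * (l * Y)\<^sup>2) = g u"
      unfolding g_def Y_def by (simp add: power2_eq_square power4_eq_xxxx algebra_simps)
    ultimately show ?thesis by simp
  qed
  have int_exp: "integrable ?S (\<lambda>u. exp (l * (v \<bullet> u)\<^sup>2))"
  proof (rule integrable_sphere[where B="exp l"])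
    fix u :: "real^'d" assume u: "norm u = 1"
    have "\<bar>v \<bullet> u\<bar> \<le> 1" using abs_inner_le[OF u, of v] v by linarith
    then have "(v \<bullet> u)\<^sup>2 \<le> 1" by (simp add: abs_square_le_1)
    then show "\<bar>exp (l * (v \<bullet> u)\<^sup>2)\<bar> \<le> exp l" using l0 by (simp add: mult_left_le)
  qed measurable
  have int_g: "integrable ?S g"
    unfolding g_def by (intro integrable_mult_right Bochner_Integration.integrable_add P.integrable_const integrable_pow_inner) 
  have s0: "0 \<le> 2 * (d - 1) / (d\<^sup>2 * (d + 2))" using d1 by simp
  have nn: "0 \<le> 1 + K * l\<^sup>2 * (2 * (d - 1) / (d\<^sup>2 * (d + 2)))"
    using K0 s0 by (intro add_nonneg_nonneg mult_nonneg_nonneg) auto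
  have "(\<integral>u. exp (l * (v \<bullet> u)\<^sup>2) \<partial>?S) \<le> (\<integral>u. g u \<partial>?S)"
    by (intro integral_mono_AE int_exp int_g) (auto intro: AE_sphere_norm[THEN eventually_mono] pw)
  also have "(\<integral>u. g u \<partial>?S) = E * ((1 - l * \<mu> + K * l\<^sup>2 * \<mu>\<^sup>2) + (l - 2 * K * l\<^sup>2 * \<mu>) * \<mu> + K * l\<^sup>2 * M4)"
    unfolding g_def
    using prob_space.prob_space[OF prob_sphere[where 'd='d]]
    by (simp add: integrable_pow_inner I2 I4 measure_def)
  also have "\<dots> = E * (1 + K * l\<^sup>2 * (M4 - \<mu>\<^sup>2))"
    by (simp add: algebra_simps power2_eq_square)
  also have "M4 - \<mu>\<^sup>2 = norm v ^ 4 * (2 * (d - 1) / (d\<^sup>2 * (d + 2)))"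
  proof -
    have mu2: "\<mu>\<^sup>2 = norm v ^ 4 / d\<^sup>2"
      by (simp add: \<mu>_def power_divide power_mult[symmetric])
    have fr: "3 / (d * (d + 2)) - 1 / d\<^sup>2 = 2 * (d - 1) / (d\<^sup>2 * (d + 2))"
    proof -
      have nz: "d \<noteq> 0" "d + 2 \<noteq> 0" using d1 by auto
      have "3 / (d * (d + 2)) - 1 / d\<^sup>2 = (3 * d\<^sup>2 - d * (d + 2)) / (d * (d + 2) * d\<^sup>2)"
        using nz by (simp add: diff_frac_eq)
      also have "\<dots> = 2 * (d - 1) / (d\<^sup>2 * (d + 2))"
      proof (subst frac_eq_eq)
        show "d * (d + 2) * d\<^sup>2 \<noteq> 0" "d\<^sup>2 * (d + 2) \<noteq> 0" using nz by auto
      qed (simp add: power2_eq_square algebra_simps)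
      finally show ?thesis .
    qed
    show ?thesis unfolding M4_def mu2 fr[symmetric] by (simp add: right_diff_distrib)
  qed
  also have "\<dots> \<le> 2 * (d - 1) / (d\<^sup>2 * (d + 2))"
  proof -
    have "norm v ^ 4 \<le> 1" using v by (simp add: power_le_one)
    moreover have "0 \<le> 2 * (d - 1) / (d\<^sup>2 * (d + 2))" using d1 by simp
    ultimately show ?thesis using mult_right_mono[of "norm v ^ 4" 1 "2 * (d - 1) / (d\<^sup>2 * (d + 2))"] by simp
  qed
  finally have "(\<integral>u. exp (l * (v \<bullet> u)\<^sup>2) \<partial>?S) \<le> E * (1 + K * l\<^sup>2 * (2 * (d - 1) / (d\<^sup>2 * (d + 2))))"
    using K0 by (simp add: E_def mult_left_mono)
  also have "\<dots> \<le> exp (l / d) * exp (K * l\<^sup>2 * (2 * (d - 1) / (d\<^sup>2 * (d + 2))))"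
  proof (rule mult_mono)
    show "E \<le> exp (l / d)" unfolding E_def using mult_left_mono[OF mu1(2) l0] by simp
    show "1 + K * l\<^sup>2 * (2 * (d - 1) / (d\<^sup>2 * (d + 2))) \<le> exp (K * l\<^sup>2 * (2 * (d - 1) / (d\<^sup>2 * (d + 2))))"
      by (rule exp_ge_add_one_self[THEN order.trans[rotated]]) simp
  qed (use nn in \<open>auto simp: E_def\<close>)
  also have "\<dots> = exp (l / d + l\<^sup>2 * (2 * (d - 1) / (d\<^sup>2 * (d + 2))) / (2 * (1 - l / 3)))"
    by (simp add: exp_add[symmetric] K_def)
  finally show ?thesis .
qed

lemma param_choice:
  fixes V L :: real
  assumes V: "V \<ge> 0" and L: "L > 0"
  defines "t \<equiv> 2/3 * L + sqrt (2 * V * L)"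
  shows "\<exists>l. 0 < l \<and> l < 3 \<and> l\<^sup>2 * V / (2 * (1 - l / 3)) - l * t \<le> - L"
proof (cases "V = 0")
  case True
  then show ?thesis by (intro exI[of _ "3/2"]) (simp add: t_def)
next
  case False
  then have V0: "V > 0" using V by simp
  define r where "r = sqrt (2 * V * L)"
  have r0: "r \<ge> 0" and r2: "r\<^sup>2 = 2 * V * L" using V L by (simp_all add: r_def)
  have t0: "t > 0" using L r0 by (simp add: t_def r_def[symmetric])
  define l where "l = t / (V + t / 3)"
  have den: "V + t / 3 > 0" using V0 t0 by simp
  have l0: "l > 0" using t0 den by (simp add: l_def)
  have l3: "l < 3"
    unfolding l_def using V0 t0 den by (simp add: divide_less_eq)
  have one: "1 - l / 3 = V / (V + t / 3)"
    unfolding l_def using den by (simp add: field_simps)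
  have "l\<^sup>2 * V / (2 * (1 - l / 3)) = l\<^sup>2 * (V + t / 3) / 2"
    unfolding one using V0 den by (simp add: field_simps)
  also have "\<dots> = l * t / 2"
  proof -
    have lt: "l * (V + t / 3) = t" using den by (simp add: l_def)
    have "l\<^sup>2 * (V + t / 3) = l * (l * (V + t / 3))" by (simp add: power2_eq_square)
    then show ?thesis using lt by simp
  qed
  finally have e0: "l\<^sup>2 * V / (2 * (1 - l / 3)) = l * t / 2" .
  have e: "l\<^sup>2 * V / (2 * (1 - l / 3)) - l * t = - (l * t / 2)" using e0 by linarith
  have key: "t\<^sup>2 \<ge> 2 * L * (V + t / 3)"
  proof -
    have tr: "t = 2/3 * L + r" by (simp add: t_def r_def)
    have "t\<^sup>2 - 2 * L * (V + t / 3) = 2/3 * L * r + (r\<^sup>2 - 2 * V * L)"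
      unfolding tr by (simp add: power2_eq_square field_simps)
    moreover have "2/3 * L * r \<ge> 0" using L r0 by simp
    ultimately show ?thesis using r2 by linarith
  qed
  have "l * t / 2 = t\<^sup>2 / (2 * (V + t / 3))" unfolding l_def by (simp add: power2_eq_square)
  also have "\<dots> \<ge> L" using key den by (simp add: le_divide_eq algebra_simps)
  finally have "l * t / 2 \<ge> L" .
  then show ?thesis using l0 l3 e by (intro exI[of _ l]) auto
qed

lemma frob_eq:
  fixes X X' :: "real ^ 'd::finite ^ 'n::finite" and u :: "'k::finite \<Rightarrow> real^'d"
  assumes "\<forall>j. j \<noteq> i \<longrightarrow> X $ j = X' $ j"
  shows "(frob_norm (X ** cols_to_mat u - X' ** cols_to_mat u))\<^sup>2 = (\<Sum>c\<in>UNIV. ((X $ i - X' $ i) \<bullet> u c)\<^sup>2)"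
proof -
  have entry: "(X ** cols_to_mat u) $ r $ c - (X' ** cols_to_mat u) $ r $ c = (X $ r - X' $ r) \<bullet> u c" for r c
    by (simp add: matrix_matrix_mult_def cols_to_mat_def inner_vec_def sum_subtractf algebra_simps)
  define F where "F r = (\<Sum>c\<in>UNIV. ((X $ r - X' $ r) \<bullet> u c)\<^sup>2)" for r
  have F: "F r = (if r = i then F i else 0)" for r
    using assms by (auto simp: F_def)
  have "(\<Sum>r\<in>UNIV. \<Sum>c\<in>UNIV. ((X ** cols_to_mat u - X' ** cols_to_mat u) $ r $ c)\<^sup>2) = (\<Sum>r\<in>UNIV. F r)"
    by (simp add: entry F_def)
  also have "\<dots> = (\<Sum>r\<in>UNIV. if r = i then F i else 0)" by (subst F) simp
  also have "\<dots> = F i" by simp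
  finally have e: "(\<Sum>r\<in>UNIV. \<Sum>c\<in>UNIV. ((X ** cols_to_mat u - X' ** cols_to_mat u) $ r $ c)\<^sup>2) = F i" .
  show ?thesis unfolding frob_norm_def e by (simp add: F_def sum_nonneg)
qed

lemma int_exp_sq: "integrable sphere_unif (\<lambda>u::real^'d::finite. exp (l * (v \<bullet> u)\<^sup>2))"
proof (rule integrable_sphere[where B="exp (\<bar>l\<bar> * norm v ^ 2)"])
  fix u :: "real^'d" assume u: "norm u = 1"
  have "\<bar>v \<bullet> u\<bar> \<le> norm v" by (rule abs_inner_le[OF u])
  then have "(v \<bullet> u)\<^sup>2 \<le> (norm v)\<^sup>2" by (simp add: abs_le_square_iff[symmetric])
  then have "l * (v \<bullet> u)\<^sup>2 \<le> \<bar>l\<bar> * norm v ^ 2"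
    by (smt (verit, best) abs_ge_self mult_mono zero_le_power2 abs_ge_zero mult_left_mono)
  then show "\<bar>exp (l * (v \<bullet> u)\<^sup>2)\<bar> \<le> exp (\<bar>l\<bar> * norm v ^ 2)" by simp
qed measurable

lemma S_meas[measurable]:
  "(\<lambda>x::'k::finite \<Rightarrow> real^'d::finite. \<Sum>j\<in>UNIV. (v \<bullet> x j)\<^sup>2) \<in> borel_measurable (sphere_cols :: ('k \<Rightarrow> real^'d) measure)"
  unfolding sphere_cols_def by measurable

lemma mgf_prod:
  fixes v :: "real^'d::finite" and l :: real
  assumes v: "norm v \<le> 1" and l0: "0 \<le> l" and l3: "l < 3"
  defines "d \<equiv> real CARD('d)"
  shows "integrable (sphere_cols :: ('k::finite \<Rightarrow> real^'d) measure) (\<lambda>x. exp (l * (\<Sum>j\<in>UNIV. (v \<bullet> x j)\<^sup>2)))"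
    and "(\<integral>x. exp (l * (\<Sum>j\<in>UNIV. (v \<bullet> x j)\<^sup>2)) \<partial>(sphere_cols :: ('k \<Rightarrow> real^'d) measure))
          \<le> exp (l / d + l\<^sup>2 * (2 * (d - 1) / (d\<^sup>2 * (d + 2))) / (2 * (1 - l / 3))) ^ CARD('k)"
proof -
  interpret PS: product_sigma_finite "\<lambda>_::'k. sphere_unif :: (real^'d) measure"
    by (simp add: product_sigma_finite_def prob_space_imp_sigma_finite prob_sphere)
  have eq: "(\<lambda>x::'k \<Rightarrow> real^'d. exp (l * (\<Sum>j\<in>UNIV. (v \<bullet> x j)\<^sup>2))) = (\<lambda>x. \<Prod>j\<in>UNIV. exp (l * (v \<bullet> x j)\<^sup>2))"
    by (simp add: sum_distrib_left exp_sum)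
  show "integrable (sphere_cols :: ('k \<Rightarrow> real^'d) measure) (\<lambda>x. exp (l * (\<Sum>j\<in>UNIV. (v \<bullet> x j)\<^sup>2)))"
    unfolding eq sphere_cols_def
    by (rule PS.product_integrable_prod[where f="\<lambda>_ u. exp (l * (v \<bullet> u)\<^sup>2)", simplified]) (simp add: int_exp_sq)
  have "(\<integral>x. exp (l * (\<Sum>j\<in>UNIV. (v \<bullet> x j)\<^sup>2)) \<partial>(sphere_cols :: ('k \<Rightarrow> real^'d) measure))
        = (\<Prod>j\<in>(UNIV::'k set). (\<integral>u. exp (l * (v \<bullet> u)\<^sup>2) \<partial>sphere_unif))"
    unfolding eq sphere_cols_def
    by (rule PS.product_integral_prod[of UNIV "\<lambda>_ u. exp (l * (v \<bullet> u)\<^sup>2)"]) (simp_all add: int_exp_sq)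
  also have "\<dots> = (\<integral>u. exp (l * (v \<bullet> u)\<^sup>2) \<partial>sphere_unif) ^ CARD('k)" by simp
  also have "\<dots> \<le> exp (l / d + l\<^sup>2 * (2 * (d - 1) / (d\<^sup>2 * (d + 2))) / (2 * (1 - l / 3))) ^ CARD('k)"
    by (intro power_mono mgf1[OF v l0 l3, folded d_def] integral_nonneg) auto
  finally show "(\<integral>x. exp (l * (\<Sum>j\<in>UNIV. (v \<bullet> x j)\<^sup>2)) \<partial>(sphere_cols :: ('k \<Rightarrow> real^'d) measure))
          \<le> exp (l / d + l\<^sup>2 * (2 * (d - 1) / (d\<^sup>2 * (d + 2))) / (2 * (1 - l / 3))) ^ CARD('k)" .
qed

lemma w_bound_eq:
  fixes d k :: nat and \<delta> :: real
  assumes d: "d \<ge> 1"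
  defines "V \<equiv> real k * (2 * (real d - 1) / ((real d)\<^sup>2 * (real d + 2)))"
  shows "w_bound d k \<delta> = real k / real d + (2/3 * ln (1/\<delta>) + sqrt (2 * V * ln (1/\<delta>)))"
proof -
  have dpos: "real d > 0" using d by simp
  define Q where "Q = real k * ((real d - 1) / (real d + 2)) * ln (1/\<delta>)"
  have e1: "2 * V * ln (1/\<delta>) = (2 / real d)\<^sup>2 * Q"
    unfolding V_def Q_def using dpos by (simp add: power2_eq_square field_simps)
  have "sqrt (2 * V * ln (1/\<delta>)) = sqrt ((2 / real d)\<^sup>2) * sqrt Q"
    by (simp only: e1 real_sqrt_mult)
  also have "sqrt ((2 / real d)\<^sup>2) = 2 / real d" using dpos by simp
  finally have "sqrt (2 * V * ln (1/\<delta>)) = 2 / real d * sqrt (real k * ((real d - 1) / (real d + 2)) * ln (1/\<delta>))"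
    by (simp add: Q_def)
  then show ?thesis unfolding w_bound_def by simp
qed

theorem lemma2:
  fixes X X' :: "real ^ 'd::finite ^ 'n::finite" and i :: 'n and \<delta> :: real
  assumes "\<forall>j. j \<noteq> i \<longrightarrow> X $ j = X' $ j"
    and "norm (X $ i - X' $ i) \<le> 1"
    and "0 < \<delta>" and "\<delta> < 1"
  shows "measure (sphere_cols :: ('k::finite \<Rightarrow> real ^ 'd) measure)
           {u \<in> space sphere_cols.
              (frob_norm (X ** cols_to_mat u - X' ** cols_to_mat u))\<^sup>2
                \<le> w_bound CARD('d) CARD('k) \<delta>}
         \<ge> 1 - \<delta>"
proof -
  let ?M = "sphere_cols :: ('k \<Rightarrow> real ^ 'd) measure"
  interpret PM: prob_space ?M
    unfolding sphere_cols_def by (intro prob_space_PiM prob_sphere)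
  define v where "v = X $ i - X' $ i"
  have v: "norm v \<le> 1" using assms(2) by (simp add: v_def)
  define S where "S x = (\<Sum>j\<in>UNIV. (v \<bullet> x j)\<^sup>2)" for x :: "'k \<Rightarrow> real^'d"
  have Sm[measurable]: "S \<in> borel_measurable ?M" unfolding S_def by (rule S_meas)
  define d where "d = real CARD('d)"
  define k where "k = real CARD('k)"
  define s where "s = 2 * (d - 1) / (d\<^sup>2 * (d + 2))"
  define V where "V = k * s"
  define L where "L = ln (1/\<delta>)"
  define t where "t = 2/3 * L + sqrt (2 * V * L)"
  define w where "w = w_bound CARD('d) CARD('k) \<delta>"
  have d1: "d \<ge> 1" by (simp add: d_def)
  have L0: "L > 0" using assms(3,4) by (simp add: L_def)
  have V0: "V \<ge> 0" using d1 by (simp add: V_def s_def k_def)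
  have w_eq: "w = k / d + t"
    unfolding w_def t_def L_def V_def s_def k_def d_def
    by (rule w_bound_eq) simp
  obtain l where l0: "0 < l" and l3: "l < 3" and lb: "l\<^sup>2 * V / (2 * (1 - l / 3)) - l * t \<le> - L"
    using param_choice[OF V0 L0] unfolding t_def[symmetric] by blast
  have set_eq: "{u \<in> space ?M. (frob_norm (X ** cols_to_mat u - X' ** cols_to_mat u))\<^sup>2 \<le> w}
      = space ?M - {x \<in> space ?M. w < S x}"
  proof -
    have fe: "\<And>u. (frob_norm (X ** cols_to_mat u - X' ** cols_to_mat u))\<^sup>2 = S u"
      using frob_eq[OF assms(1)] by (simp add: S_def v_def)
    show ?thesis unfolding fe by auto
  qed
  have int: "integrable ?M (\<lambda>x. exp (l * S x))"
    unfolding S_def using mgf_prod(1)[OF v less_imp_le[OF l0] l3] .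
  have mgf: "(\<integral>x. exp (l * S x) \<partial>?M) \<le> exp (l / d + l\<^sup>2 * s / (2 * (1 - l / 3))) ^ CARD('k)"
    unfolding S_def s_def d_def using mgf_prod(2)[OF v less_imp_le[OF l0] l3] by simp
  have "measure ?M {x \<in> space ?M. w < S x} \<le> measure ?M {x \<in> space ?M. w \<le> S x}"
    by (intro PM.finite_measure_mono) auto
  also have "{x \<in> space ?M. w \<le> S x} = {x \<in> space ?M. exp (l * w) \<le> exp (l * S x)}"
    using l0 by auto
  also have "measure ?M \<dots> \<le> (\<integral>x. exp (l * S x) \<partial>?M) / exp (l * w)"
    by (intro integral_Markov_inequality_measure[OF int]) auto
  also have "\<dots> \<le> exp (l / d + l\<^sup>2 * s / (2 * (1 - l / 3))) ^ CARD('k) / exp (l * w)"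
    by (intro divide_right_mono mgf) simp
  also have "\<dots> = exp (l\<^sup>2 * V / (2 * (1 - l / 3)) - l * t)"
  proof -
    have "exp (l / d + l\<^sup>2 * s / (2 * (1 - l / 3))) ^ CARD('k) = exp (k * (l / d + l\<^sup>2 * s / (2 * (1 - l / 3))))"
      by (simp add: k_def exp_of_nat_mult[symmetric])
    moreover have "k * (l / d + l\<^sup>2 * s / (2 * (1 - l / 3))) - l * w = l\<^sup>2 * V / (2 * (1 - l / 3)) - l * t"
      unfolding w_eq V_def by (simp add: algebra_simps)
    ultimately show ?thesis by (simp add: exp_diff[symmetric])
  qed
  also have "\<dots> \<le> exp (- L)" using lb by simp
  also have "exp (- L) = \<delta>" using assms(3) by (simp add: L_def ln_div)
  finally have bad: "measure ?M {x \<in> space ?M. w < S x} \<le> \<delta>" .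
  have "measure ?M (space ?M - {x \<in> space ?M. w < S x}) = 1 - measure ?M {x \<in> space ?M. w < S x}"
    by (intro PM.prob_compl) measurable
  then show ?thesis using bad set_eq unfolding w_def by simp
qed

end
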